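(* Let $n,x$ be integers with $1<x<n$, so that $G=C_{2n}(x,1,n)$ is a $5$-regular circulant graph. If $n\equiv 2\pmod 3$, $x\equiv 1\pmod 3$ and $1<x\leq \tfrac{2n}{3}$, then $G$ is word-representable.
   Context: Two distinct letters $x,y$ alternate in a word $w$ if, after deleting all other letters from $w$, the resulting word is of the form $xyxy\cdots$ or $yxyx\cdots$ (of even or odd length). A graph $G=(V,E)$ is word-representable if there is a word $w$ over the alphabet $V$, containing every letter of $V$ at least once, such that for all distinct $x,y\in V$, $xy\in E$ if and only if $x$ and $y$ alternate in $w$. For an integer $m$ and a set $R$ of positive integers each at most $m/2$, the circulant graph $C_m(R)$ has vertex set $\{0,1,\dots,m-1\}$, with $i$ and $j$ adjacent iff $\min(|i-j|,\,m-|i-j|)\in R$. $C_{2n}(x,1,n)$ denotes the circulant graph on $2n$ vertices with jump set $\{1,x,n\}$; it is $5$-regular exactly when $1<x<n$. *)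

theory Defs
  imports Main
begin

definition alternate :: "'a list \<Rightarrow> 'a \<Rightarrow> 'a \<Rightarrow> bool" where
  "alternate w x y \<longleftrightarrow>
     (let u = filter (\<lambda>z. z = x \<or> z = y) w in
        \<forall>i. Suc i < length u \<longrightarrow> u ! i \<noteq> u ! Suc i)"

definition word_representable :: "'a set \<Rightarrow> ('a \<Rightarrow> 'a \<Rightarrow> bool) \<Rightarrow> bool" where
  "word_representable V E \<longleftrightarrow>
     (\<exists>w. set w = V \<and>
        (\<forall>x\<in>V. \<forall>y\<in>V. x \<noteq> y \<longrightarrow> (E x y \<longleftrightarrow> alternate w x y)))"

definition circ_vertices :: "nat \<Rightarrow> nat set" where
  "circ_vertices m = {0..<m}"

definition circ_adj :: "nat \<Rightarrow> nat set \<Rightarrow> nat \<Rightarrow> nat \<Rightarrow> bool" where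
  "circ_adj m R i j \<longleftrightarrow>
     (let d = (if i \<le> j then j - i else i - j) in min d (m - d) \<in> R)"

end

theory Submission
  imports Defs
begin


lemma succ_nthA: "successively P u \<longleftrightarrow> (\<forall>i. Suc i < length u \<longrightarrow> P (u!i) (u!Suc i))"
proof (induction u rule: induct_list012)
  case (3 x y zs)
  then show ?case
    by (auto simp: nth_Cons split: nat.splits)
qed auto

lemma alt_succA: "alternate w a b \<longleftrightarrow> successively (\<noteq>) (filter (\<lambda>z. z = a \<or> z = b) w)"
  unfolding alternate_def Let_def succ_nthA by blast

lemma alt_sym: "alternate w a b \<longleftrightarrow> alternate w b a"
  unfolding alt_succA by (simp add: disj_commute)

lemma succ_concat_rep:
  assumes "p \<noteq> q" "\<forall>l\<in>set ls. l = [p,q,p,q]"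
  shows "successively (\<noteq>) (concat ls)"
  using assms(2)
proof (induction ls)
  case (Cons l ls)
  then have l: "l = [p,q,p,q]" by simp
  have IH: "successively (\<noteq>) (concat ls)" using Cons by simp
  have h: "concat ls = [] \<or> hd (concat ls) = p"
  proof (cases ls)
    case (Cons l' ls')
    then have "l' = [p,q,p,q]" using Cons.prems by simp
    then show ?thesis using Cons by simp
  qed simp
  have s4: "successively (\<noteq>) [p,q,p,q]" using assms(1) by simp
  show ?case
    unfolding concat.simps l successively_append_iff using IH h s4 assms(1) by auto
qed simp

lemma not_succ_concat:
  assumes "l \<in> set ls" "\<not> successively R l"
  shows "\<not> successively R (concat ls)"
proof -
  obtain xs ys where e: "ls = xs @ l # ys" using assms(1) by (meson split_list)
  have "\<not> successively R (concat xs @ (l @ concat ys))"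
    using assms(2) by (simp add: successively_append_iff)
  then show ?thesis unfolding e by simp
qed

lemma filter_two:
  assumes "u < v" "v < N"
  shows "filter (\<lambda>z. R z \<and> (z = u \<or> z = v)) [0..<N] =
    (if R u then [u] else []) @ (if R v then [v] else [])"
  by (rule sorted_distinct_set_unique) (use assms in \<open>auto intro: sorted_wrt_filter\<close>)

lemma filter_two_gen:
  assumes "u \<noteq> v" "u < N" "v < N" "\<forall>z. Q z \<longrightarrow> z = u \<or> z = v"
  shows "filter Q [0..<N] =
    (if u < v then (if Q u then [u] else []) @ (if Q v then [v] else [])
     else (if Q v then [v] else []) @ (if Q u then [u] else []))"
proof -
  have e: "filter Q [0..<N] = filter (\<lambda>z. Q z \<and> (z = u \<or> z = v)) [0..<N]"
    using assms(4) by (intro filter_cong) auto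
  show ?thesis
  proof (cases "u < v")
    case True then show ?thesis unfolding e using filter_two[of u v N Q] assms by simp
  next
    case False
    then have "v < u" using assms by simp
    then show ?thesis unfolding e using filter_two[of v u N Q] assms False by (simp add: disj_commute)
  qed
qed

definition cl :: "nat \<Rightarrow> (nat \<Rightarrow> nat) \<Rightarrow> nat \<Rightarrow> nat list" where
  "cl N col k = filter (\<lambda>v. col v = k) [0..<N]"

definition uT :: "nat \<Rightarrow> (nat \<Rightarrow> nat) \<Rightarrow> nat list" where
  "uT N col = (cl N col 2 @ cl N col 0 @ cl N col 1) @ (cl N col 2 @ rev (cl N col 0) @ rev (cl N col 1))"

definition uQ :: "nat \<Rightarrow> (nat \<Rightarrow> nat \<Rightarrow> bool) \<Rightarrow> (nat \<Rightarrow> nat) \<Rightarrow> nat \<Rightarrow> nat list" where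
  "uQ N E col a = (cl N col 2 @ filter (\<lambda>y. y \<noteq> a) (cl N col 0) @ filter (\<lambda>b. \<not> E a b) (cl N col 1)
      @ [a] @ filter (E a) (cl N col 1)) @ (cl N col 2 @ cl N col 0 @ cl N col 1)"

definition uS :: "nat \<Rightarrow> (nat \<Rightarrow> nat \<Rightarrow> bool) \<Rightarrow> (nat \<Rightarrow> nat) \<Rightarrow> nat \<Rightarrow> nat list" where
  "uS N E col c = (filter (\<lambda>y. y \<noteq> c) (cl N col 2) @ filter (\<lambda>a. \<not> E c a) (cl N col 0) @ [c]
      @ filter (E c) (cl N col 0) @ filter (E c) (cl N col 1) @ [c] @ filter (\<lambda>b. \<not> E c b) (cl N col 1))
      @ (filter (\<lambda>y. y \<noteq> c) (cl N col 2) @ cl N col 0 @ cl N col 1)"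

definition unitsW :: "nat \<Rightarrow> (nat \<Rightarrow> nat \<Rightarrow> bool) \<Rightarrow> (nat \<Rightarrow> nat) \<Rightarrow> nat list list" where
  "unitsW N E col = [uT N col] @ map (uQ N E col) (cl N col 0) @ map (uS N E col) (cl N col 2)"

lemma conj_ne_disj: "(x \<noteq> u \<and> (x = u \<or> x = v)) \<longleftrightarrow> (x \<noteq> u \<and> x = v)" by auto

lemma conj_ne_disj2: "(x \<noteq> v \<and> (x = u \<or> x = v)) \<longleftrightarrow> (x \<noteq> v \<and> x = u)" by auto

lemma three_col_pair:
  assumes symE: "\<And>u v. E u v = E v u"
    and colr: "\<And>v. v < N \<Longrightarrow> col v < 3"
    and prp: "\<And>u v. u < N \<Longrightarrow> v < N \<Longrightarrow> u \<noteq> v \<Longrightarrow> E u v \<Longrightarrow> col u \<noteq> col v"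
    and uv: "u < N" "v < N" "u \<noteq> v" "col u \<le> col v"
  shows "successively (\<noteq>) (concat (map (filter (\<lambda>z. z = u \<or> z = v)) (unitsW N E col))) \<longleftrightarrow> E u v"
proof -
  let ?P = "\<lambda>z. z = u \<or> z = v"
  note fs = filter_two_gen[OF uv(3,1,2)] cl_def uT_def uQ_def uS_def rev_filter[symmetric] conj_ne_disj conj_ne_disj2
  have cu: "col u < 3" "col v < 3" using colr uv by auto
  consider "col u = 0" "col v = 0" | "col u = 1" "col v = 1" | "col u = 2" "col v = 2"
    | "col u = 0" "col v = 1" | "col u = 0" "col v = 2" | "col u = 1" "col v = 2"
    using cu uv(4) by linarith
  then show ?thesis
  proof cases
    case 1
    then have ne: "\<not> E u v" using prp[of u v] uv by auto
    have "\<not> successively (\<noteq>) (filter ?P (uT N col))"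
      using 1 uv by (auto simp: fs)
    moreover have "filter ?P (uT N col) \<in> set (map (filter ?P) (unitsW N E col))"
      unfolding unitsW_def by simp
    ultimately show ?thesis using ne not_succ_concat by metis
  next
    case 2
    then have ne: "\<not> E u v" using prp[of u v] uv by auto
    have "\<not> successively (\<noteq>) (filter ?P (uT N col))"
      using 2 uv by (auto simp: fs)
    moreover have "filter ?P (uT N col) \<in> set (map (filter ?P) (unitsW N E col))"
      unfolding unitsW_def by simp
    ultimately show ?thesis using ne not_succ_concat by metis
  next
    case 3
    then have ne: "\<not> E u v" using prp[of u v] uv by auto
    have "\<not> successively (\<noteq>) (filter ?P (uS N E col u))"
      using 3 uv by (auto simp: fs)
    moreover have "u \<in> set (cl N col 2)" using 3 uv by (simp add: cl_def)
    ultimately have "filter ?P (uS N E col u) \<in> set (map (filter ?P) (unitsW N E col))"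
      "\<not> successively (\<noteq>) (filter ?P (uS N E col u))"
      unfolding unitsW_def by auto
    then show ?thesis using ne not_succ_concat by metis
  next
    case 4
    show ?thesis
    proof (cases "E u v")
      case True
      have "\<forall>l\<in>set (map (filter ?P) (unitsW N E col)). l = [u,v,u,v]"
        using 4 uv True by (auto simp: unitsW_def fs)
      then show ?thesis using succ_concat_rep[of u v] uv True by blast
    next
      case False
      have "\<not> successively (\<noteq>) (filter ?P (uQ N E col u))"
        using 4 uv False by (auto simp: fs)
      moreover have "u \<in> set (cl N col 0)" using 4 uv by (simp add: cl_def)
      ultimately have "filter ?P (uQ N E col u) \<in> set (map (filter ?P) (unitsW N E col))"
        "\<not> successively (\<noteq>) (filter ?P (uQ N E col u))"
        unfolding unitsW_def by auto
      then show ?thesis using False not_succ_concat by metis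
    qed
  next
    case 5
    show ?thesis
    proof (cases "E u v")
      case True
      have "\<forall>l\<in>set (map (filter ?P) (unitsW N E col)). l = [v,u,v,u]"
        using 5 uv True symE[of u v] by (auto simp: unitsW_def fs)
      then show ?thesis using succ_concat_rep[of v u] uv True by blast
    next
      case False
      have "\<not> successively (\<noteq>) (filter ?P (uS N E col v))"
        using 5 uv False symE[of u v] by (auto simp: fs)
      moreover have "v \<in> set (cl N col 2)" using 5 uv by (simp add: cl_def)
      ultimately have "filter ?P (uS N E col v) \<in> set (map (filter ?P) (unitsW N E col))"
        "\<not> successively (\<noteq>) (filter ?P (uS N E col v))"
        unfolding unitsW_def by auto
      then show ?thesis using False not_succ_concat by metis
    qed
  next
    case 6
    show ?thesis
    proof (cases "E u v")
      case True
      have "\<forall>l\<in>set (map (filter ?P) (unitsW N E col)). l = [v,u,v,u]"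
        using 6 uv True symE[of u v] by (auto simp: unitsW_def fs)
      then show ?thesis using succ_concat_rep[of v u] uv True by blast
    next
      case False
      have "\<not> successively (\<noteq>) (filter ?P (uS N E col v))"
        using 6 uv False symE[of u v] by (auto simp: fs)
      moreover have "v \<in> set (cl N col 2)" using 6 uv by (simp add: cl_def)
      ultimately have "filter ?P (uS N E col v) \<in> set (map (filter ?P) (unitsW N E col))"
        "\<not> successively (\<noteq>) (filter ?P (uS N E col v))"
        unfolding unitsW_def by auto
      then show ?thesis using False not_succ_concat by metis
    qed
  qed
qed




lemma K_exists:
  fixes n x :: nat
  assumes "1 < x" "x < n" "n mod 3 = 2" "x mod 3 = 1" "3 * x \<le> 2 * n" "2 * x \<noteq> n"
  shows "\<exists>K. K mod 6 = 5 \<and> K < 2 * n \<and> (x * K div (2 * n)) mod 3 = 0"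
proof -
  obtain p where p: "n = 3 * p + 2" using assms(3) by (metis div_mult_mod_eq mult.commute)
  obtain q where q: "x = 3 * q + 1" using assms(4) by (metis div_mult_mod_eq mult.commute)
  have q1: "1 \<le> q" using assms(1) q by (cases q) auto
  have ne5: "5 * x \<noteq> 2 * n" using p q by presburger
  have m12: "(12 * t + c) mod 6 = c mod 6" for t c :: nat
  proof -
    have "12 * t + c = c + (2 * t) * 6" by simp
    then show ?thesis by (simp only: mod_mult_self1)
  qed
  consider "5 * x < 2 * n" | "2 * n < 5 * x \<and> 2 * x < n" | "n < 2 * x"
    using assms(6) ne5 by linarith
  then show ?thesis
  proof cases
    case 1
    then show ?thesis using q1 q by (intro exI[of _ 5]) auto
  next
    case 2
    define d where "d = p - 2 * q"
    have d: "n = 2 * x + 3 * d" using p q 2 unfolding d_def by linarith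
    have d1: "1 \<le> d" using d assms(6) by auto
    have d9: "9 * d \<le> n" using d 2 by linarith
    define P where "P t \<longleftrightarrow> n < 3 * (12 * t + 5) * d" for t
    have nd: "n \<le> n * d" using d1 by simp
    have "3 * (12 * n + 5) * d = 36 * (n * d) + 15 * d" "3 * (12 * n + 11) * d = 36 * (n * d) + 33 * d"
      by (simp_all add: algebra_simps)
    then have Pn: "P n" unfolding P_def using d1 nd by linarith
    define t where "t = (LEAST t. P t)"
    have Pt: "P t" unfolding t_def by (rule LeastI[of P n]) (rule Pn)
    have nPt: "\<not> P t'" if "t' < t" for t' using not_less_Least[of t' P] that unfolding t_def by simp
    define K where "K = 12 * t + 5"
    have eq1: "2 * (x * K) + 3 * (d * K) = n * K" using d by (simp add: algebra_simps)
    have eq2: "n * K = 12 * (n * t) + 5 * n" "d * K = 12 * (d * t) + 5 * d"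
      unfolding K_def by (simp_all add: algebra_simps)
    have up: "n < 3 * (d * K)" using Pt unfolding P_def K_def by (simp add: algebra_simps)
    have lo: "3 * (d * K) \<le> 5 * n"
    proof (cases t)
      case 0 then show ?thesis using d unfolding K_def by simp
    next
      case (Suc t')
      have "\<not> P t'" using nPt Suc by simp
      then have "3 * (12 * t' + 5) * d \<le> n" unfolding P_def by simp
      then show ?thesis using Suc d9 unfolding K_def by (simp add: algebra_simps)
    qed
    have a1': "6 * (n * t) \<le> x * K" using eq1 eq2 lo by linarith
    have a2': "x * K < 6 * (n * t) + 2 * n" using eq1 eq2 up by linarith
    have a1: "2 * n * (3 * t) \<le> x * K" using a1' by (simp add: algebra_simps)
    have a2: "x * K < 2 * n * Suc (3 * t)" using a2' by (simp add: algebra_simps)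
    have dv: "x * K div (2 * n) = 3 * t"
      by (rule div_nat_eqI) (use a1 a2 in auto)
    have "K \<le> d * K" using d1 by simp
    then have "K < 2 * n" using lo d1 assms by linarith
    moreover have "K mod 6 = 5" unfolding K_def using m12[of t 5] by simp
    ultimately show ?thesis using dv by (intro exI[of _ K]) auto
  next
    case 3
    define d where "d = 2 * q - p"
    have d: "2 * x = n + 3 * d" using p q 3 unfolding d_def by linarith
    have d1: "1 \<le> d" using d 3 by auto
    have d9: "9 * d \<le> n" using d assms(5) by linarith
    define P where "P t \<longleftrightarrow> n \<le> 3 * (12 * t + 11) * d" for t
    have nd: "n \<le> n * d" using d1 by simp
    have "3 * (12 * n + 5) * d = 36 * (n * d) + 15 * d" "3 * (12 * n + 11) * d = 36 * (n * d) + 33 * d"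
      by (simp_all add: algebra_simps)
    then have Pn: "P n" unfolding P_def using d1 nd by linarith
    define t where "t = (LEAST t. P t)"
    have Pt: "P t" unfolding t_def by (rule LeastI[of P n]) (rule Pn)
    have nPt: "\<not> P t'" if "t' < t" for t' using not_less_Least[of t' P] that unfolding t_def by simp
    define K where "K = 12 * t + 11"
    have eq1: "2 * (x * K) = n * K + 3 * (d * K)" using d by (simp add: algebra_simps)
    have eq2: "n * K = 12 * (n * t) + 11 * n" "d * K = 12 * (d * t) + 11 * d"
      unfolding K_def by (simp_all add: algebra_simps)
    have up: "n \<le> 3 * (d * K)" using Pt unfolding P_def K_def by (simp add: algebra_simps)
    have lo: "3 * (d * K) < 5 * n"
    proof (cases t)
      case 0 then show ?thesis using d9 d1 unfolding K_def by simp
    next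
      case (Suc t')
      have "\<not> P t'" using nPt Suc by simp
      then have "n > 3 * (12 * t' + 11) * d" unfolding P_def by simp
      then show ?thesis using Suc d9 unfolding K_def by (simp add: algebra_simps)
    qed
    have a1': "6 * (n * t) + 6 * n \<le> x * K" using eq1 eq2 up by linarith
    have a2': "x * K < 6 * (n * t) + 8 * n" using eq1 eq2 lo by linarith
    have a1: "2 * n * (3 * t + 3) \<le> x * K" using a1' by (simp add: algebra_simps)
    have a2: "x * K < 2 * n * Suc (3 * t + 3)" using a2' by (simp add: algebra_simps)
    have dv: "x * K div (2 * n) = 3 * t + 3"
      by (rule div_nat_eqI) (use a1 a2 in auto)
    have "K \<le> d * K" using d1 by simp
    then have "K < 2 * n" using lo d1 assms by linarith
    moreover have "K mod 6 = 5" unfolding K_def using m12[of t 11] by simp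
    moreover have "(3 * t + 3) mod 3 = (0::nat)" by simp
    ultimately show ?thesis using dv by (intro exI[of _ K]) auto
  qed
qed




definition ccol :: "nat \<Rightarrow> nat \<Rightarrow> nat \<Rightarrow> nat" where
  "ccol m K i = (i + i * K div m) mod 3"

lemma mod3_cancel: "((a::nat) + b) mod 3 = a mod 3 \<Longrightarrow> b mod 3 = 0"
  by presburger

lemma m3: "(e::nat) \<le> 1 \<Longrightarrow> (3 * a + (1 + e)) mod 3 \<noteq> 0"
  by presburger

lemma ccol_step:
  fixes n x K :: nat
  assumes "n mod 3 = 2" "x mod 3 = 1" "K mod 6 = 5" "K < 2 * n" "(x * K div (2 * n)) mod 3 = 0"
    and r: "r \<in> {1, x, n}"
  shows "ccol (2*n) K (i + r) \<noteq> ccol (2*n) K i"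
proof -
  let ?m = "2 * n"
  have m0: "0 < ?m" using assms(4) by simp
  define e where "e = (i * K mod ?m + r * K mod ?m) div ?m"
  have e1: "e \<le> 1"
  proof -
    have "i * K mod ?m < ?m" "r * K mod ?m < ?m" using m0 by simp_all
    then have "i * K mod ?m + r * K mod ?m < 2 * ?m" by linarith
    then have "(i * K mod ?m + r * K mod ?m) div ?m < 2" by (rule less_mult_imp_div_less)
    then show ?thesis unfolding e_def by simp
  qed
  have dv: "(i + r) * K div ?m = i * K div ?m + r * K div ?m + e"
    unfolding e_def add_mult_distrib by (rule div_add1_eq)
  have e01: "e = 0 \<or> e = 1" using e1 by auto
  have key: "(r + r * K div ?m + e) mod 3 \<noteq> 0"
  proof -
    consider "r = 1" | "r = x" | "r = n" using r by auto
    then show ?thesis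
    proof cases
      case 1
      then have "r * K div ?m = 0" using assms(4) by simp
      then show ?thesis using 1 e01 by auto
    next
      case 2
      have q: "x = 3 * (x div 3) + 1" using div_mult_mod_eq[of x 3] assms(2) by simp
      have b: "x * K div ?m = 3 * (x * K div ?m div 3)" using div_mult_mod_eq[of "x * K div ?m" 3] assms(5) by simp
      obtain q where q': "x = 3 * q + 1" using q by blast
      obtain b where b': "x * K div ?m = 3 * b" using b by blast
      have "r + r * K div ?m + e = 3 * (q + b) + (1 + e)" using 2 q' b' by simp
      then show ?thesis using e1 m3 by metis
    next
      case 3
      have s: "K = 6 * (K div 6) + 5" using div_mult_mod_eq[of K 6] assms(3) by simp
      have p: "n = 3 * (n div 3) + 2" using div_mult_mod_eq[of n 3] assms(1) by simp
      define s' where "s' = K div 6"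
      define p' where "p' = n div 3"
      have "n * K div (2 * n) = (n * K) div (n * 2)" by (simp add: mult.commute)
      also have "\<dots> = K div 2" using m0 by (intro div_mult_mult1) simp
      also have "K div 2 = 3 * s' + 2" using s unfolding s'_def by linarith
      finally have nk: "n * K div ?m = 3 * s' + 2" .
      obtain p'' where p'': "n = 3 * p'' + 2" using p by blast
      have "r + r * K div ?m + e = 3 * (p'' + s' + 1) + (1 + e)" using 3 nk p'' by simp
      then show ?thesis using e1 m3 by metis
    qed
  qed
  show ?thesis
  proof
    assume "ccol (2*n) K (i + r) = ccol (2*n) K i"
    then have "((i + i * K div ?m) + (r + r * K div ?m + e)) mod 3 = (i + i * K div ?m) mod 3"
      unfolding ccol_def dv by (simp add: ac_simps)
    then have "(r + r * K div ?m + e) mod 3 = 0" by (rule mod3_cancel)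
    with key show False by simp
  qed
qed

lemma ccol_period:
  fixes n K :: nat
  assumes "n mod 3 = 2" "K mod 6 = 5" "0 < n"
  shows "ccol (2*n) K (i + 2*n) = ccol (2*n) K i"
proof -
  have s: "K = 6 * (K div 6) + 5" using div_mult_mod_eq[of K 6] assms(2) by simp
  have p: "n = 3 * (n div 3) + 2" using div_mult_mod_eq[of n 3] assms(1) by simp
  obtain s' where s': "K = 6 * s' + 5" using s by blast
  obtain p' where p': "n = 3 * p' + 2" using p by blast
  have "(i + 2*n) * K div (2*n) = i * K div (2*n) + K"
    using assms(3) by (simp add: add_mult_distrib)
  then have eq: "i + 2 * n + (i + 2*n) * K div (2*n) = (i + i * K div (2*n)) + 3 * (2 * p' + 2 * s' + 3)"
    using s' p' by simp
  show ?thesis unfolding ccol_def eq by (rule mod_mult_self2)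
qed




lemma succ_nth: "successively P u \<longleftrightarrow> (\<forall>i. Suc i < length u \<longrightarrow> P (u!i) (u!Suc i))"
proof (induction u rule: induct_list012)
  case (3 x y zs)
  then show ?case
    by (auto simp: nth_Cons split: nat.splits)
qed auto

lemma alt_succ: "alternate w a b \<longleftrightarrow> successively (\<noteq>) (filter (\<lambda>z. z = a \<or> z = b) w)"
  unfolding alternate_def Let_def succ_nth by blast

definition bk :: "nat \<Rightarrow> nat \<Rightarrow> nat \<Rightarrow> (nat \<times> nat) list" where
  "bk x q s = [(s,q), (s,(q+1) mod 4), (s,(q+2) mod 4), (s,(q+3) mod 4),
     (if s = 0 then (x-1, (q+3) mod 4) else (s-1, q))]"

definition rd :: "nat \<Rightarrow> nat \<Rightarrow> (nat \<times> nat) list" where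
  "rd x q = concat (map (bk x q) [0..<x])"

definition WP :: "nat \<Rightarrow> (nat \<times> nat) list" where
  "WP x = concat (map (rd x) [0..<4])"

lemma concat_map_filter_empty:
  assumes "\<And>i. i \<in> set l \<Longrightarrow> \<not> Q i \<Longrightarrow> F i = []"
  shows "concat (map F l) = concat (map F (filter Q l))"
  using assms by (induction l) auto

lemma sparse:
  assumes "sorted xs" "distinct xs" "set xs \<subseteq> {..<N}"
    and "\<And>i. i < N \<Longrightarrow> i \<notin> set xs \<Longrightarrow> F i = []"
  shows "concat (map F [0..<N]) = concat (map F xs)"
proof -
  have "concat (map F [0..<N]) = concat (map F (filter (\<lambda>i. i \<in> set xs) [0..<N]))"
    by (rule concat_map_filter_empty) (use assms(4) in auto)
  also have "filter (\<lambda>i. i \<in> set xs) [0..<N] = xs"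
    by (rule sorted_distinct_set_unique) (use assms(1-3) in \<open>auto intro: sorted_wrt_filter\<close>)
  finally show ?thesis .
qed

lemma mem_bk:
  assumes "q < 4"
  shows "(p,k) \<in> set (bk x q s) \<longleftrightarrow> (p = s \<and> k < 4) \<or> (s \<noteq> 0 \<and> p = s - 1 \<and> k = q)
     \<or> (s = 0 \<and> p = x - 1 \<and> k = (q+3) mod 4)"
  using assms unfolding bk_def
  by (cases "q = 0"; cases "q = 1"; cases "q = 2"; cases "q = 3"; auto)

lemma bk_empty:
  assumes "q < 4" "s \<noteq> g" "s \<noteq> Suc g" "s \<noteq> h" "s \<noteq> Suc h" "s = 0 \<Longrightarrow> g \<noteq> x - 1 \<and> h \<noteq> x - 1"
  shows "filter (\<lambda>z. z = (g,a) \<or> z = (h,b)) (bk x q s) = []"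
proof -
  have "(g,a) \<notin> set (bk x q s)" "(h,b) \<notin> set (bk x q s)"
    using assms by (auto simp: mem_bk)
  then show ?thesis by (auto simp: filter_empty_conv)
qed

lemma rd_sparse:
  assumes "sorted xs" "distinct xs" "set xs \<subseteq> {..<x}"
    and "\<And>s. s < x \<Longrightarrow> s \<notin> set xs \<Longrightarrow> filter P (bk x q s) = []"
  shows "filter P (rd x q) = concat (map (\<lambda>s. filter P (bk x q s)) xs)"
proof -
  have "filter P (rd x q) = concat (map (\<lambda>s. filter P (bk x q s)) [0..<x])"
    unfolding rd_def by (simp add: filter_concat map_map o_def)
  also have "\<dots> = concat (map (\<lambda>s. filter P (bk x q s)) xs)"
    by (rule sparse) (use assms in auto)
  finally show ?thesis .
qed

lemma WP_filter: "filter P (WP x) = filter P (rd x 0) @ filter P (rd x 1) @ filter P (rd x 2) @ filter P (rd x 3)"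
proof -
  have "[0..<4] = [0,1,2,3::nat]" by (simp add: upt_rec)
  then show ?thesis unfolding WP_def by (simp add: filter_concat)
qed

lemma sub1_eq[simp]: "(g - Suc 0 = g) = (g = (0::nat))" by arith

lemma fourE: "(a::nat) < 4 \<Longrightarrow> (a = 0 \<Longrightarrow> P) \<Longrightarrow> (a = 1 \<Longrightarrow> P) \<Longrightarrow> (a = 2 \<Longrightarrow> P) \<Longrightarrow> (a = 3 \<Longrightarrow> P) \<Longrightarrow> P"
  by linarith

lemma bk_simps:
  "bk x 0 s = [(s,0),(s,1),(s,2),(s,3), (if s = 0 then (x-1, 3) else (s-1, 0))]"
  "bk x 1 s = [(s,1),(s,2),(s,3),(s,0), (if s = 0 then (x-1, 0) else (s-1, 1))]"
  "bk x (Suc 0) s = [(s,1),(s,2),(s,3),(s,0), (if s = 0 then (x-1, 0) else (s-1, 1))]"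
  "bk x 2 s = [(s,2),(s,3),(s,0),(s,1), (if s = 0 then (x-1, 1) else (s-1, 2))]"
  "bk x 3 s = [(s,3),(s,0),(s,1),(s,2), (if s = 0 then (x-1, 2) else (s-1, 3))]"
  by (simp_all add: bk_def)

lemma C1:
  assumes "4 \<le> x" "h = g" "Suc g < x \<and> a < b" "g < x" "h < x" "a < 4" "b < 4"
  shows "successively (\<noteq>) (filter (\<lambda>z. z = (g,a) \<or> z = (h,b)) (WP x)) \<longleftrightarrow>
    (g = h \<and> a \<noteq> b) \<or> (h = Suc g \<and> a = b) \<or> (g = 0 \<and> h = x - 1 \<and> a = (b+1) mod 4)"
proof -
  let ?P = "\<lambda>z. z = (g,a) \<or> z = (h,b)"
  let ?F = "\<lambda>q. concat (map (\<lambda>s. filter ?P (bk x q s)) [g, Suc g])"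
  have r: "filter ?P (rd x q) = ?F q" if "q < 4" for q
    using assms that by (subst rd_sparse[of "[g, Suc g]"]) (auto intro!: bk_empty)
  have e: "filter ?P (WP x) = ?F 0 @ ?F 1 @ ?F 2 @ ?F 3"
    unfolding WP_filter by (simp only: r zero_less_numeral one_less_numeral_iff numeral_less_iff semiring_norm)
  show ?thesis
    unfolding e using assms
    by (elim fourE) (auto simp: bk_simps)
qed

lemma C2:
  assumes "4 \<le> x" "h = g" "g = x - 1 \<and> a < b" "g < x" "h < x" "a < 4" "b < 4"
  shows "successively (\<noteq>) (filter (\<lambda>z. z = (g,a) \<or> z = (h,b)) (WP x)) \<longleftrightarrow>
    (g = h \<and> a \<noteq> b) \<or> (h = Suc g \<and> a = b) \<or> (g = 0 \<and> h = x - 1 \<and> a = (b+1) mod 4)"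
proof -
  let ?P = "\<lambda>z. z = (g,a) \<or> z = (h,b)"
  let ?F = "\<lambda>q. concat (map (\<lambda>s. filter ?P (bk x q s)) [0, x - 1])"
  have r: "filter ?P (rd x q) = ?F q" if "q < 4" for q
    using assms that by (subst rd_sparse[of "[0, x - 1]"]) (auto intro!: bk_empty)
  have e: "filter ?P (WP x) = ?F 0 @ ?F 1 @ ?F 2 @ ?F 3"
    unfolding WP_filter by (simp only: r zero_less_numeral one_less_numeral_iff numeral_less_iff semiring_norm)
  show ?thesis
    unfolding e using assms
    by (elim fourE) (auto simp: bk_simps)
qed

lemma C3:
  assumes "4 \<le> x" "h = Suc g" "Suc h < x" "g < x" "h < x" "a < 4" "b < 4"
  shows "successively (\<noteq>) (filter (\<lambda>z. z = (g,a) \<or> z = (h,b)) (WP x)) \<longleftrightarrow>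
    (g = h \<and> a \<noteq> b) \<or> (h = Suc g \<and> a = b) \<or> (g = 0 \<and> h = x - 1 \<and> a = (b+1) mod 4)"
proof -
  let ?P = "\<lambda>z. z = (g,a) \<or> z = (h,b)"
  let ?F = "\<lambda>q. concat (map (\<lambda>s. filter ?P (bk x q s)) [g, Suc g, Suc (Suc g)])"
  have r: "filter ?P (rd x q) = ?F q" if "q < 4" for q
    using assms that by (subst rd_sparse[of "[g, Suc g, Suc (Suc g)]"]) (auto intro!: bk_empty)
  have e: "filter ?P (WP x) = ?F 0 @ ?F 1 @ ?F 2 @ ?F 3"
    unfolding WP_filter by (simp only: r zero_less_numeral one_less_numeral_iff numeral_less_iff semiring_norm)
  show ?thesis
    unfolding e using assms
    by (elim fourE) (auto simp: bk_simps)
qed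

lemma C4:
  assumes "4 \<le> x" "h = Suc g" "Suc h = x" "g < x" "h < x" "a < 4" "b < 4"
  shows "successively (\<noteq>) (filter (\<lambda>z. z = (g,a) \<or> z = (h,b)) (WP x)) \<longleftrightarrow>
    (g = h \<and> a \<noteq> b) \<or> (h = Suc g \<and> a = b) \<or> (g = 0 \<and> h = x - 1 \<and> a = (b+1) mod 4)"
proof -
  let ?P = "\<lambda>z. z = (g,a) \<or> z = (h,b)"
  let ?F = "\<lambda>q. concat (map (\<lambda>s. filter ?P (bk x q s)) [0, g, Suc g])"
  have r: "filter ?P (rd x q) = ?F q" if "q < 4" for q
    using assms that by (subst rd_sparse[of "[0, g, Suc g]"]) (auto intro!: bk_empty)
  have e: "filter ?P (WP x) = ?F 0 @ ?F 1 @ ?F 2 @ ?F 3"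
    unfolding WP_filter by (simp only: r zero_less_numeral one_less_numeral_iff numeral_less_iff semiring_norm)
  show ?thesis
    unfolding e using assms
    by (elim fourE) (auto simp: bk_simps)
qed

lemma C5:
  assumes "4 \<le> x" "Suc g < h" "Suc h < x" "g < x" "h < x" "a < 4" "b < 4"
  shows "successively (\<noteq>) (filter (\<lambda>z. z = (g,a) \<or> z = (h,b)) (WP x)) \<longleftrightarrow>
    (g = h \<and> a \<noteq> b) \<or> (h = Suc g \<and> a = b) \<or> (g = 0 \<and> h = x - 1 \<and> a = (b+1) mod 4)"
proof -
  let ?P = "\<lambda>z. z = (g,a) \<or> z = (h,b)"
  let ?F = "\<lambda>q. concat (map (\<lambda>s. filter ?P (bk x q s)) [g, Suc g, h, Suc h])"
  have r: "filter ?P (rd x q) = ?F q" if "q < 4" for q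
    using assms that by (subst rd_sparse[of "[g, Suc g, h, Suc h]"]) (auto intro!: bk_empty)
  have e: "filter ?P (WP x) = ?F 0 @ ?F 1 @ ?F 2 @ ?F 3"
    unfolding WP_filter by (simp only: r zero_less_numeral one_less_numeral_iff numeral_less_iff semiring_norm)
  show ?thesis
    unfolding e using assms
    by (elim fourE) (auto simp: bk_simps)
qed

lemma C6:
  assumes "4 \<le> x" "Suc g < h" "Suc h = x \<and> 0 < g" "g < x" "h < x" "a < 4" "b < 4"
  shows "successively (\<noteq>) (filter (\<lambda>z. z = (g,a) \<or> z = (h,b)) (WP x)) \<longleftrightarrow>
    (g = h \<and> a \<noteq> b) \<or> (h = Suc g \<and> a = b) \<or> (g = 0 \<and> h = x - 1 \<and> a = (b+1) mod 4)"
proof -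
  let ?P = "\<lambda>z. z = (g,a) \<or> z = (h,b)"
  let ?F = "\<lambda>q. concat (map (\<lambda>s. filter ?P (bk x q s)) [0, g, Suc g, h])"
  have r: "filter ?P (rd x q) = ?F q" if "q < 4" for q
    using assms that by (subst rd_sparse[of "[0, g, Suc g, h]"]) (auto intro!: bk_empty)
  have e: "filter ?P (WP x) = ?F 0 @ ?F 1 @ ?F 2 @ ?F 3"
    unfolding WP_filter by (simp only: r zero_less_numeral one_less_numeral_iff numeral_less_iff semiring_norm)
  show ?thesis
    unfolding e using assms
    by (elim fourE) (auto simp: bk_simps)
qed

lemma C7:
  assumes "4 \<le> x" "g = 0" "Suc h = x" "g < x" "h < x" "a < 4" "b < 4"
  shows "successively (\<noteq>) (filter (\<lambda>z. z = (g,a) \<or> z = (h,b)) (WP x)) \<longleftrightarrow>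
    (g = h \<and> a \<noteq> b) \<or> (h = Suc g \<and> a = b) \<or> (g = 0 \<and> h = x - 1 \<and> a = (b+1) mod 4)"
proof -
  let ?P = "\<lambda>z. z = (g,a) \<or> z = (h,b)"
  let ?F = "\<lambda>q. concat (map (\<lambda>s. filter ?P (bk x q s)) [0, 1, h])"
  have r: "filter ?P (rd x q) = ?F q" if "q < 4" for q
    using assms that by (subst rd_sparse[of "[0, 1, h]"]) (auto intro!: bk_empty)
  have e: "filter ?P (WP x) = ?F 0 @ ?F 1 @ ?F 2 @ ?F 3"
    unfolding WP_filter by (simp only: r zero_less_numeral one_less_numeral_iff numeral_less_iff semiring_norm)
  show ?thesis
    unfolding e using assms
    by (elim fourE) (auto simp: bk_simps)
qed




lemma circ_adj_iff:
  assumes "u < m" "v < m" "\<forall>r\<in>R. 2 * r \<le> m"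
  shows "circ_adj m R u v \<longleftrightarrow> (\<exists>r\<in>R. v = u + r \<or> u = v + r \<or> v + m = u + r \<or> u + m = v + r)"
proof
  assume "circ_adj m R u v"
  then obtain r where r: "r \<in> R" "r = min (if u \<le> v then v - u else u - v) (m - (if u \<le> v then v - u else u - v))"
    unfolding circ_adj_def Let_def by auto
  then show "\<exists>r\<in>R. v = u + r \<or> u = v + r \<or> v + m = u + r \<or> u + m = v + r"
    using assms by (intro bexI[of _ r]) (auto simp: min_def split: if_splits)
next
  assume "\<exists>r\<in>R. v = u + r \<or> u = v + r \<or> v + m = u + r \<or> u + m = v + r"
  then obtain r where r: "r \<in> R" "v = u + r \<or> u = v + r \<or> v + m = u + r \<or> u + m = v + r" by blast
  have "2 * r \<le> m" using assms r by auto
  then have "min (if u \<le> v then v - u else u - v) (m - (if u \<le> v then v - u else u - v)) = r"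
    using r(2) assms by (auto simp: min_def)
  then show "circ_adj m R u v" unfolding circ_adj_def Let_def using r by simp
qed

definition AdjS :: "nat \<Rightarrow> nat \<Rightarrow> nat \<Rightarrow> nat \<Rightarrow> nat \<Rightarrow> bool" where
  "AdjS x g a h b \<longleftrightarrow> (g = h \<and> a \<noteq> b) \<or> (h = Suc g \<and> a = b) \<or> (g = Suc h \<and> a = b)
     \<or> (g = 0 \<and> h = x - 1 \<and> a = (b+1) mod 4) \<or> (h = 0 \<and> g = x - 1 \<and> b = (a+1) mod 4)"

lemma core_le:
  assumes "4 \<le> x" "g < x" "h < x" "a < 4" "b < 4" "(g,a) \<noteq> (h,b)" "g \<le> h"
  shows "successively (\<noteq>) (filter (\<lambda>z. z = (g,a) \<or> z = (h,b)) (WP x)) \<longleftrightarrow> AdjS x g a h b"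
proof -
  have adj: "AdjS x g a h b \<longleftrightarrow> (g = h \<and> a \<noteq> b) \<or> (h = Suc g \<and> a = b) \<or> (g = 0 \<and> h = x - 1 \<and> a = (b+1) mod 4)"
    unfolding AdjS_def using assms by auto
  consider "g = h" "Suc g < x" "a < b" | "g = h" "Suc g < x" "b < a" | "g = h" "g = x - 1" "a < b"
    | "g = h" "g = x - 1" "b < a"
    | "h = Suc g" "Suc h < x" | "h = Suc g" "Suc h = x" | "Suc g < h" "Suc h < x"
    | "Suc g < h" "Suc h = x" "0 < g" | "g = 0" "Suc g < h" "Suc h = x"
  proof (cases "g = h")
    case True
    then have "a \<noteq> b" using assms(6) by simp
    then show ?thesis using True assms(2) that(1-4) by (cases "Suc g < x"; cases "a < b") auto
  next
    case False
    then have gh: "g < h" using assms(7) by simp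
    show ?thesis
    proof (cases "h = Suc g")
      case True then show ?thesis using assms(3) that(5,6) by (cases "Suc h < x") auto
    next
      case False
      then have "Suc g < h" using gh by simp
      then show ?thesis using assms(3) that(7-9) by (cases "Suc h < x"; cases "g = 0") auto
    qed
  qed
  then show ?thesis
  proof cases
    case 1
    have "successively (\<noteq>) (filter (\<lambda>z. z = (g,a) \<or> z = (h,b)) (WP x))"
      using C1[OF assms(1) 1(1)[symmetric] conjI[OF 1(2) 1(3)] assms(2-5)] 1 by blast
    then show ?thesis unfolding adj using 1 by blast
  next
    case 2
    have e: "(\<lambda>z. z = (g,a) \<or> z = (h,b)) = (\<lambda>z. z = (h,b) \<or> z = (g,a))"
      by (auto simp: fun_eq_iff)
    have "successively (\<noteq>) (filter (\<lambda>z. z = (h,b) \<or> z = (g,a)) (WP x))"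
      using C1[OF assms(1) 2(1) conjI[OF _ 2(3)] assms(3) assms(2) assms(5) assms(4)] 2 by blast
    then show ?thesis unfolding adj e using 2 by blast
  next
    case 3
    have "successively (\<noteq>) (filter (\<lambda>z. z = (g,a) \<or> z = (h,b)) (WP x))"
      using C2[OF assms(1) 3(1)[symmetric] conjI[OF 3(2) 3(3)] assms(2-5)] 3 by blast
    then show ?thesis unfolding adj using 3 by blast
  next
    case 4
    have e: "(\<lambda>z. z = (g,a) \<or> z = (h,b)) = (\<lambda>z. z = (h,b) \<or> z = (g,a))"
      by (auto simp: fun_eq_iff)
    have "successively (\<noteq>) (filter (\<lambda>z. z = (h,b) \<or> z = (g,a)) (WP x))"
      using C2[OF assms(1) 4(1) conjI[OF _ 4(3)] assms(3) assms(2) assms(5) assms(4)] 4 by blast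
    then show ?thesis unfolding adj e using 4 by blast
  next
    case 5 then show ?thesis unfolding adj using C3[of x h g a b] assms by simp
  next
    case 6 then show ?thesis unfolding adj using C4[of x h g a b] assms by simp
  next
    case 7 then show ?thesis unfolding adj using C5[of x g h a b] assms by simp
  next
    case 8 then show ?thesis unfolding adj using C6[of x g h a b] assms by simp
  next
    case 9 then show ?thesis unfolding adj using C7[of x g h a b] assms by simp
  qed
qed

lemma core:
  assumes "4 \<le> x" "g < x" "h < x" "a < 4" "b < 4" "(g,a) \<noteq> (h,b)"
  shows "successively (\<noteq>) (filter (\<lambda>z. z = (g,a) \<or> z = (h,b)) (WP x)) \<longleftrightarrow> AdjS x g a h b"
proof (cases "g \<le> h")
  case True then show ?thesis using core_le assms by blast
next
  case False
  have e: "(\<lambda>z. z = (g,a) \<or> z = (h,b)) = (\<lambda>z. z = (h,b) \<or> z = (g,a))"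
    by (auto simp: fun_eq_iff)
  have "AdjS x g a h b \<longleftrightarrow> AdjS x h b g a" unfolding AdjS_def by auto
  moreover have "(h,b) \<noteq> (g,a)" using assms(6) by auto
  ultimately show ?thesis unfolding e using core_le[of x h g b a] assms False by simp
qed

definition enc :: "nat \<Rightarrow> nat \<times> nat \<Rightarrow> nat" where
  "enc x p = fst p + snd p * x"

lemma set_WP:
  assumes "1 \<le> x"
  shows "set (WP x) = {(s,k). s < x \<and> k < 4}"
proof
  show "set (WP x) \<subseteq> {(s,k). s < x \<and> k < 4}"
  proof
    fix z assume "z \<in> set (WP x)"
    then obtain q s where qs: "q < 4" "s < x" "z \<in> set (bk x q s)"
      unfolding WP_def rd_def by auto
    obtain p k where z: "z = (p,k)" by (cases z)
    show "z \<in> {(s,k). s < x \<and> k < 4}"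
      using qs assms unfolding z by (auto simp: mem_bk)
  qed
next
  show "{(s,k). s < x \<and> k < 4} \<subseteq> set (WP x)"
  proof clarify
    fix s k assume sk: "s < x" "k < (4::nat)"
    have "(s,k) \<in> set (bk x k s)" using sk by (simp add: mem_bk)
    then have "(s,k) \<in> set (rd x k)" unfolding rd_def using sk by auto
    then show "(s,k) \<in> set (WP x)" unfolding WP_def using sk by auto
  qed
qed

lemma alt_map:
  assumes "inj_on f (set w \<union> {p, p'})"
  shows "alternate (map f w) (f p) (f p') \<longleftrightarrow> alternate w p p'"
proof -
  have "filter (\<lambda>z. z = f p \<or> z = f p') (map f w) = map f (filter (\<lambda>z. z = p \<or> z = p') w)"
    unfolding filter_map o_def
  proof (rule arg_cong[where f = "map f"], rule filter_cong)
    fix z assume z: "z \<in> set w"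
    have "f z = f p \<longleftrightarrow> z = p" using inj_onD[OF assms, of z p] z by auto
    moreover have "f z = f p' \<longleftrightarrow> z = p'" using inj_onD[OF assms, of z p'] z by auto
    ultimately show "(f z = f p \<or> f z = f p') = (z = p \<or> z = p')" by simp
  qed simp
  moreover have "successively (\<noteq>) (map f l) \<longleftrightarrow> successively (\<noteq>) l" if "set l \<subseteq> set w" for l
    unfolding successively_map
  proof (rule successively_cong)
    fix a b assume "a \<in> set l" "b \<in> set l"
    then show "(f a \<noteq> f b) = (a \<noteq> b)" using inj_onD[OF assms, of a b] that by auto
  qed simp
  ultimately show ?thesis unfolding alt_succ by simp
qed

lemma adj4:
  assumes "4 \<le> x" "g < x" "h < x" "a < 4" "b < 4"
  shows "(\<exists>r\<in>{1, x, 2*x}. h + b*x = g + a*x + r \<or> g + a*x = h + b*x + r \<or>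
           h + b*x + 4*x = g + a*x + r \<or> g + a*x + 4*x = h + b*x + r) \<longleftrightarrow> AdjS x g a h b"
  using assms(4,5) unfolding AdjS_def
  by (elim fourE) (use assms(1-3) in \<open>simp; arith\<close>)+



theorem n2x_case:
  assumes "4 \<le> x"
  shows "word_representable {0..<4*x} (circ_adj (4*x) {1, x, 2*x})"
proof -
  let ?W = "map (enc x) (WP x)"
  let ?S = "{(s,k). s < x \<and> k < (4::nat)}"
  have x1: "1 \<le> x" using assms by simp
  have inj: "inj_on (enc x) ?S"
  proof (rule inj_onI)
    fix p p' assume a: "p \<in> ?S" "p' \<in> ?S" "enc x p = enc x p'"
    obtain s k where p: "p = (s,k)" by (cases p)
    obtain s' k' where p': "p' = (s',k')" by (cases p')
    have sk: "s < x" "s' < x" using a p p' by auto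
    have e: "s + k * x = s' + k' * x" using a(3) p p' unfolding enc_def by simp
    have "(s + k * x) mod x = s" "(s' + k' * x) mod x = s'" using sk by simp_all
    then have "s = s'" using e by simp
    moreover have "(s + k * x) div x = k" "(s' + k' * x) div x = k'" using sk by simp_all
    then have "k = k'" using e by simp
    ultimately show "p = p'" using p p' by simp
  qed
  have dm: "u = u mod x + u div x * x" for u by simp
  have setW: "set ?W = {0..<4*x}"
  proof
    show "set ?W \<subseteq> {0..<4*x}"
    proof
      fix i assume "i \<in> set ?W"
      then obtain s k where sk: "s < x" "k < 4" "i = s + k * x"
        unfolding set_map set_WP[OF x1] enc_def by auto
      have "k * x \<le> 3 * x" using sk(2) by simp
      then have "s + k * x < 4 * x" using sk by linarith
      then show "i \<in> {0..<4*x}" using sk by simp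
    qed
  next
    show "{0..<4*x} \<subseteq> set ?W"
    proof
      fix i assume i: "i \<in> {0..<4*x}"
      have "i div x < 4" using i by (simp add: div_less_iff_less_mult mult.commute)
      moreover have "i mod x < x" using x1 by simp
      ultimately have "(i mod x, i div x) \<in> set (WP x)" unfolding set_WP[OF x1] by simp
      moreover have "enc x (i mod x, i div x) = i" unfolding enc_def using dm[of i] by simp
      ultimately show "i \<in> set ?W" by (metis image_eqI set_map)
    qed
  qed
  show ?thesis
    unfolding word_representable_def
  proof (intro exI[of _ ?W] conjI ballI impI)
    show "set ?W = {0..<4*x}" by (rule setW)
  next
    fix u v assume uv: "u \<in> {0..<4*x}" "v \<in> {0..<4*x}" "u \<noteq> v"
    let ?p = "(u mod x, u div x)" and ?p' = "(v mod x, v div x)"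
    have a4: "u div x < 4" "v div x < 4" using uv by (simp_all add: div_less_iff_less_mult mult.commute)
    have m4: "u mod x < x" "v mod x < x" using x1 by simp_all
    have eu: "enc x ?p = u" "enc x ?p' = v" unfolding enc_def using dm[of u] dm[of v] by simp_all
    have pp: "?p \<noteq> ?p'" using eu uv(3) by metis
    have sub: "set (WP x) \<union> {?p, ?p'} \<subseteq> ?S" using a4 m4 set_WP[OF x1] by auto
    have "alternate ?W u v \<longleftrightarrow> alternate (WP x) ?p ?p'"
      using alt_map[OF inj_on_subset[OF inj sub]] eu by simp
    also have "\<dots> \<longleftrightarrow> AdjS x (u mod x) (u div x) (v mod x) (v div x)"
      unfolding alt_succ by (rule core[OF assms m4 a4 pp])
    also have "\<dots> \<longleftrightarrow> circ_adj (4*x) {1, x, 2*x} u v"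
    proof -
      have R: "\<forall>r\<in>{1, x, 2*x}. 2 * r \<le> 4 * x" using x1 by auto
      have "circ_adj (4*x) {1, x, 2*x} u v \<longleftrightarrow>
        (\<exists>r\<in>{1, x, 2*x}. v = u + r \<or> u = v + r \<or> v + 4*x = u + r \<or> u + 4*x = v + r)"
        using circ_adj_iff[OF _ _ R] uv by simp
      also have "\<dots> \<longleftrightarrow> AdjS x (u mod x) (u div x) (v mod x) (v div x)"
        using adj4[OF assms m4 a4] dm[of u] dm[of v] by simp
      finally show ?thesis by simp
    qed
    finally show "circ_adj (4*x) {1, x, 2*x} u v \<longleftrightarrow> alternate ?W u v" by simp
  qed
qed




lemma three_col_wr:
  fixes N :: nat and E :: "nat \<Rightarrow> nat \<Rightarrow> bool" and col :: "nat \<Rightarrow> nat"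
  assumes symE: "\<And>u v. E u v = E v u"
    and colr: "\<And>v. v < N \<Longrightarrow> col v < 3"
    and prp: "\<And>u v. u < N \<Longrightarrow> v < N \<Longrightarrow> u \<noteq> v \<Longrightarrow> E u v \<Longrightarrow> col u \<noteq> col v"
  shows "word_representable {0..<N} E"
proof -
  let ?w = "concat (unitsW N E col)"
  have setw: "set ?w = {0..<N}"
  proof
    show "set ?w \<subseteq> {0..<N}"
      by (auto simp: unitsW_def uT_def uQ_def uS_def cl_def)
  next
    show "{0..<N} \<subseteq> set ?w"
    proof
      fix v assume v: "v \<in> {0..<N}"
      then have "col v = 0 \<or> col v = 1 \<or> col v = 2" using colr[of v] by auto
      then have "v \<in> set (uT N col)" using v by (auto simp: uT_def cl_def)
      then show "v \<in> set ?w" by (auto simp: unitsW_def)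
    qed
  qed
  show ?thesis
    unfolding word_representable_def
  proof (intro exI[of _ ?w] conjI ballI impI)
    show "set ?w = {0..<N}" by (rule setw)
  next
    fix u v assume uv: "u \<in> {0..<N}" "v \<in> {0..<N}" "u \<noteq> v"
    have fc: "filter P ?w = concat (map (filter P) (unitsW N E col))" for P
      by (simp add: filter_concat)
    show "E u v \<longleftrightarrow> alternate ?w u v"
    proof (cases "col u \<le> col v")
      case True
      then show ?thesis unfolding alt_succA fc
        using three_col_pair[OF symE colr prp, where u=u and v=v] uv by auto
    next
      case False
      have "alternate ?w u v \<longleftrightarrow> alternate ?w v u" by (rule alt_sym)
      also have "\<dots> \<longleftrightarrow> E v u" unfolding alt_succA fc
        using three_col_pair[OF symE colr prp, where u=v and v=u] uv False by auto
      finally show ?thesis using symE[of u v] by simp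
    qed
  qed
qed

lemma circ_adj_sym: "circ_adj m R u v = circ_adj m R v u"
  unfolding circ_adj_def Let_def by auto

theorem corollary5:
  fixes n x :: nat
  assumes "1 < x" and "x < n"
    and "n mod 3 = 2" and "x mod 3 = 1"
    and "3 * x \<le> 2 * n"
  shows "word_representable (circ_vertices (2 * n)) (circ_adj (2 * n) {1, x, n})"
proof (cases "2 * x = n")
  case True
  have q: "x = 3 * (x div 3) + 1" using div_mult_mod_eq[of x 3] assms(4) by simp
  have "x div 3 \<noteq> 0"
  proof
    assume "x div 3 = 0"
    then have "x = 1" using q by simp
    with assms(1) show False by simp
  qed
  then have x4: "4 \<le> x" using q by linarith
  have e1: "2 * n = 4 * x" using True by simp
  have e2: "{1, x, n} = {1, x, 2 * x}" using True by simp
  show ?thesis unfolding circ_vertices_def e1 e2 by (rule n2x_case[OF x4])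
next
  case False
  obtain K :: nat where K: "K mod 6 = 5" "K < 2 * n" "(x * K div (2 * n)) mod 3 = 0"
    using K_exists[OF assms False] by auto
  have n0: "0 < n" using assms by simp
  have R: "\<forall>r\<in>{1, x, n}. 2 * r \<le> 2 * n" using assms by auto
  have prp: "ccol (2*n) K u \<noteq> ccol (2*n) K v"
    if uv: "u < 2*n" "v < 2*n" "u \<noteq> v" "circ_adj (2*n) {1, x, n} u v" for u v
  proof -
    obtain r where r: "r \<in> {1, x, n}" "v = u + r \<or> u = v + r \<or> v + 2*n = u + r \<or> u + 2*n = v + r"
      using circ_adj_iff[OF uv(1,2) R] uv(4) by blast
    have st: "ccol (2*n) K (i + r) \<noteq> ccol (2*n) K i" for i
      by (rule ccol_step[OF assms(3,4) K r(1)])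
    have pe: "ccol (2*n) K (i + 2*n) = ccol (2*n) K i" for i
      by (rule ccol_period[OF assms(3) K(1) n0])
    from r(2) show ?thesis
    proof (elim disjE)
      assume "v = u + r" then show ?thesis using st[of u] by simp
    next
      assume "u = v + r" then show ?thesis using st[of v] by simp
    next
      assume "v + 2*n = u + r" then show ?thesis using st[of u] pe[of v] by simp
    next
      assume "u + 2*n = v + r" then show ?thesis using st[of v] pe[of u] by simp
    qed
  qed
  have "word_representable {0..<2*n} (circ_adj (2*n) {1, x, n})"
  proof (rule three_col_wr[where col = "ccol (2*n) K"])
    show "circ_adj (2*n) {1, x, n} u v = circ_adj (2*n) {1, x, n} v u" for u v
      by (rule circ_adj_sym)
    show "ccol (2*n) K v < 3" for v unfolding ccol_def by simp
    show "ccol (2*n) K u \<noteq> ccol (2*n) K v"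
      if "u < 2*n" "v < 2*n" "u \<noteq> v" "circ_adj (2*n) {1, x, n} u v" for u v
      using prp that by blast
  qed
  then show ?thesis unfolding circ_vertices_def by simp
qed


end
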